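(* Let $u\in C^1(\mathbb R)$ with $u'$ compactly supported, let $1\le p<\infty$ and $\gamma<-1$. Then $$\limsup_{\lambda\to0^+}\lambda^p\nu_\gamma(E_{\lambda,\gamma/p}[u])\le\frac{\kappa(p,1)}{|\gamma|}\|u'\|_{L^p(\mathbb R)}^p.$$
   Context: Here $N=1$: $\nu_\gamma(E)=\iint_{(x,y)\in E,\,x\ne y}|x-y|^{\gamma-1}\,dx\,dy$ for measurable $E\subset\mathbb R^2$, and $E_{\lambda,b}[u]=\{(x,y)\in\mathbb R^2:x\ne y,\ \frac{|u(x)-u(y)|}{|x-y|^{1+b}}>\lambda\}$. $\kappa(p,1)=\int_{\mathbb S^0}|e\cdot\omega|^p\,d\omega=2$. *)

theory Defs
  imports "HOL-Analysis.Analysis"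
begin

definition nu :: "real \<Rightarrow> (real \<times> real) set \<Rightarrow> ennreal" where
  "nu \<gamma> E = (\<integral>\<^sup>+ z \<in> {z \<in> E. fst z \<noteq> snd z}.
                 ennreal (\<bar>fst z - snd z\<bar> powr (\<gamma> - 1)) \<partial>(lborel \<Otimes>\<^sub>M lborel))"

definition Elev :: "real \<Rightarrow> real \<Rightarrow> (real \<Rightarrow> real) \<Rightarrow> (real \<times> real) set" where
  "Elev lam b u = {(x, y). x \<noteq> y \<and> \<bar>u x - u y\<bar> / \<bar>x - y\<bar> powr (1 + b) > lam}"

text \<open>kappa(p,1) = integral over S^0 = {-1,1} (counting measure) of |e . omega|^p.\<close>
definition kappa1 :: "real \<Rightarrow> real" where
  "kappa1 p = (\<Sum>\<omega>\<in>{-1, 1::real}. \<bar>1 * \<omega>\<bar> powr p)"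

end

theory Submission
  imports Defs
begin

lemma tail_int:
  fixes c r :: real assumes c: "1 < c" and r: "0 < r"
  shows "(\<integral>\<^sup>+t. ennreal (t powr (-c)) * indicator {r..} t \<partial>lborel) = ennreal (r powr (1-c) / (c-1))"
proof -
  have "(\<integral>\<^sup>+t. ennreal (t powr (-c)) * indicator {r..} t \<partial>lborel) = ennreal (0 - (-(r powr (1-c)) / (c-1)))"
  proof (rule nn_integral_FTC_atLeast)
    show "(\<lambda>t. t powr (-c)) \<in> borel_measurable borel" by measurable
    fix x assume x: "r \<le> x"
    then have xp: "0 < x" using r by simp
    show "0 \<le> x powr (-c)" by simp
    show "((\<lambda>t. -(t powr (1-c)) / (c-1)) has_real_derivative x powr (-c)) (at x)"
    proof -
      have d: "((\<lambda>t. t powr (1-c)) has_real_derivative (1-c) * x powr (1 - c - 1)) (at x)"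
        by (rule has_real_derivative_powr[OF xp])
      then have "((\<lambda>t. -(t powr (1-c)) / (c-1)) has_real_derivative -((1-c) * x powr (1 - c - 1)) / (c-1)) (at x)"
        using DERIV_cdivide[OF DERIV_minus[OF d], of "c-1"] by simp
      moreover have "-((1-c) * x powr (1 - c - 1)) / (c-1) = x powr (-c)" using c by (simp add: field_simps)
      ultimately show ?thesis by simp
    qed
  next
    have l0: "((\<lambda>t. t powr (1-c)) \<longlongrightarrow> 0) at_top"
      using c by (intro tendsto_neg_powr filterlim_ident) auto
    show "((\<lambda>t. -(t powr (1-c)) / (c-1)) \<longlongrightarrow> 0) at_top"
      using tendsto_divide[OF tendsto_minus[OF l0] tendsto_const[of "c-1"]] c by simp
  qed
  then show ?thesis by simp
qed

lemma two_tail_int: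
  fixes c r x :: real assumes c: "1 < c" and r: "0 < r"
  shows "(\<integral>\<^sup>+y. ennreal (if r \<le> \<bar>y - x\<bar> then \<bar>y - x\<bar> powr (-c) else 0) \<partial>lborel)
     = ennreal (2 * (r powr (1-c) / (c-1)))"
proof -
  let ?g = "\<lambda>t::real. ennreal (t powr (-c)) * indicator {r..} t"
  have gm: "?g \<in> borel_measurable borel" by measurable
  have "(\<integral>\<^sup>+y. ennreal (if r \<le> \<bar>y - x\<bar> then \<bar>y - x\<bar> powr (-c) else 0) \<partial>lborel)
     = (\<integral>\<^sup>+t. ennreal (if r \<le> \<bar>t\<bar> then \<bar>t\<bar> powr (-c) else 0) \<partial>lborel)"
  proof -
    have fm: "(\<lambda>y. ennreal (if r \<le> \<bar>y - x\<bar> then \<bar>y - x\<bar> powr (-c) else 0)) \<in> borel_measurable borel"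
      by measurable
    show ?thesis using nn_integral_real_affine[OF fm, of 1 x] by (simp cong: if_cong)
  qed
  also have "\<dots> = (\<integral>\<^sup>+t. ?g t + ?g (0 + (-1) * t) \<partial>lborel)"
    using r by (intro nn_integral_cong) (auto simp: indicator_def)
  also have "\<dots> = (\<integral>\<^sup>+t. ?g t \<partial>lborel) + (\<integral>\<^sup>+t. ?g (0 + (-1) * t) \<partial>lborel)"
    by (rule nn_integral_add) measurable
  also have "(\<integral>\<^sup>+t. ?g (0 + (-1) * t) \<partial>lborel) = (\<integral>\<^sup>+t. ?g t \<partial>lborel)"
    using nn_integral_real_affine[OF gm, of "-1" 0] by simp
  also have "(\<integral>\<^sup>+t. ?g t \<partial>lborel) = ennreal (r powr (1-c) / (c-1))"
    by (rule tail_int[OF c r])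
  finally show ?thesis using c r by (simp flip: ennreal_plus)
qed

lemma mvt_between:
  fixes u u' :: "real \<Rightarrow> real"
  assumes deriv: "\<And>x. (u has_real_derivative u' x) (at x)" and xy: "x \<noteq> y"
  shows "\<exists>z. \<bar>z - x\<bar> \<le> \<bar>y - x\<bar> \<and> u y - u x = (y - x) * u' z"
proof (cases "x < y")
  case True
  from MVT2[OF True deriv] obtain z where "x < z" "z < y" "u y - u x = (y - x) * u' z" by blast
  then show ?thesis by (intro exI[of _ z]) auto
next
  case False
  then have "y < x" using xy by simp
  from MVT2[OF this deriv] obtain z where "y < z" "z < x" "u x - u y = (x - y) * u' z" by blast
  then show ?thesis by (intro exI[of _ z]) (auto simp: algebra_simps)
qed

lemma key_point:
  fixes u u' w :: "real \<Rightarrow> real"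
  assumes deriv: "\<And>x. (u has_real_derivative u' x) (at x)"
    and R: "\<And>z. u' z \<noteq> 0 \<Longrightarrow> \<bar>z\<bar> \<le> R"
    and w_def: "\<And>z. w z = \<bar>u' z\<bar> powr p"
    and p: "1 \<le> p" and \<gamma>: "\<gamma> < -1" and lam: "0 < lam" and eps: "0 < \<epsilon>"
    and \<delta>: "0 < \<delta>" "\<delta> \<le> 1"
    and uc: "\<And>x z. \<bar>z\<bar> \<le> R \<Longrightarrow> \<bar>x - z\<bar> < \<delta> \<Longrightarrow> \<bar>w z - w x\<bar> < \<epsilon>"
    and xy: "x \<noteq> y" and E: "\<bar>u x - u y\<bar> / \<bar>x - y\<bar> powr (1 + \<gamma> / p) > lam"
  shows "(x \<in> {-(R+1)..R+1} \<and> (lam / (w x + \<epsilon>) powr (1/p)) powr (p / (-\<gamma>)) \<le> \<bar>y - x\<bar>)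
         \<or> max \<delta> (\<bar>x\<bar> - R) \<le> \<bar>y - x\<bar>"
proof -
  obtain z where z: "\<bar>z - x\<bar> \<le> \<bar>y - x\<bar>" "u y - u x = (y - x) * u' z"
    using mvt_between[OF deriv xy] by blast
  have uz0: "u' z \<noteq> 0"
  proof
    assume "u' z = 0"
    then have "u x - u y = 0" using z(2) by simp
    then show False using E lam by simp
  qed
  have zR: "\<bar>z\<bar> \<le> R" using R[OF uz0] .
  show ?thesis
  proof (cases "\<delta> \<le> \<bar>y - x\<bar>")
    case True
    have "\<bar>x\<bar> - R \<le> \<bar>y - x\<bar>" using z(1) zR by linarith
    then show ?thesis using True by simp
  next
    case False
    have d: "\<bar>x - z\<bar> < \<delta>" using False z(1) by linarith
    have xK: "x \<in> {-(R+1)..R+1}" using d zR \<delta> by auto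
    have wz: "w z < w x + \<epsilon>" using uc[OF zR d] by linarith
    have w0: "0 \<le> w z" "0 \<le> w x" using w_def by auto
    define g where "g = (w x + \<epsilon>) powr (1/p)"
    have gpos: "0 < g" unfolding g_def using w0 eps by simp
    have "\<bar>u' z\<bar> = (\<bar>u' z\<bar> powr p) powr (1/p)" using p by (simp add: powr_powr)
    also have "\<dots> = w z powr (1/p)" using w_def by simp
    also have "\<dots> \<le> g" unfolding g_def using p w0 wz by (intro powr_mono2) auto
    finally have uz: "\<bar>u' z\<bar> \<le> g" .
    define h where "h = \<bar>y - x\<bar>"
    have hpos: "0 < h" using xy unfolding h_def by simp
    have hxy: "\<bar>x - y\<bar> = h" unfolding h_def by simp
    have hsplit: "h = h powr (1 + \<gamma>/p) * h powr (-\<gamma>/p)"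
      using hpos by (simp add: powr_add[symmetric])
    have Pp: "0 < h powr (1 + \<gamma>/p)" using hpos by simp
    have "lam * h powr (1 + \<gamma>/p) < \<bar>u x - u y\<bar>"
      using E Pp hxy by (simp add: pos_less_divide_eq)
    also have "\<bar>u x - u y\<bar> = \<bar>u' z\<bar> * h" proof -
      have "u x - u y = -((y - x) * u' z)" using z(2) by simp
      then show ?thesis unfolding h_def by (simp add: abs_mult)
    qed
    also have "\<dots> \<le> g * h" using uz hpos by simp
    also have "\<dots> = (g * h powr (-\<gamma>/p)) * h powr (1 + \<gamma>/p)"
      using hsplit by (metis mult.commute mult.left_commute)
    finally have "lam < g * h powr (-\<gamma>/p)" using Pp by simp
    then have lg: "lam / g < h powr (-\<gamma>/p)" using gpos by (simp add: divide_less_eq mult.commute)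
    have "(lam / g) powr (p / (-\<gamma>)) \<le> (h powr (-\<gamma>/p)) powr (p / (-\<gamma>))"
      using lg lam gpos p \<gamma> by (intro powr_mono2) (auto simp: divide_nonneg_neg)
    also have "\<dots> = h" using p \<gamma> hpos by (simp add: powr_powr)
    finally show ?thesis using xK unfolding g_def h_def by simp
  qed
qed

lemma far_finite:
  fixes \<delta> R \<gamma> :: real
  assumes \<delta>: "0 < \<delta>" "\<delta> \<le> 1" and R: "0 < R" and \<gamma>: "\<gamma> < -1"
  shows "(\<integral>\<^sup>+x. ennreal (2 * (max \<delta> (\<bar>x\<bar> - R) powr \<gamma> / (-\<gamma>))) \<partial>lborel) < \<infinity>"
proof -
  define C1 where "C1 = 2 / (-\<gamma>) * \<delta> powr \<gamma>"
  define C2 where "C2 = 2 / (-\<gamma>) * (R+1) powr (-\<gamma>)"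
  have C: "0 \<le> C1" "0 \<le> C2" using \<gamma> unfolding C1_def C2_def by (auto intro!: divide_nonneg_neg)
  have pt: "max \<delta> (\<bar>x\<bar> - R) powr \<gamma> \<le> \<delta> powr \<gamma> * indicator {-(R+1)..R+1} x
      + (R+1) powr (-\<gamma>) * (if R+1 \<le> \<bar>x - 0\<bar> then \<bar>x - 0\<bar> powr (-(-\<gamma>)) else 0)" for x
  proof (cases "\<bar>x\<bar> \<le> R+1")
    case True
    have "max \<delta> (\<bar>x\<bar> - R) powr \<gamma> \<le> \<delta> powr \<gamma>" using \<delta> \<gamma> by (intro powr_mono2') auto
    moreover have "0 \<le> (R+1) powr (-\<gamma>) * (if R+1 \<le> \<bar>x - 0\<bar> then \<bar>x - 0\<bar> powr (-(-\<gamma>)) else 0)" by simp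
    moreover have "\<delta> powr \<gamma> * indicator {-(R+1)..R+1} x = \<delta> powr \<gamma>" using True by (auto simp: indicator_def)
    ultimately show ?thesis by linarith
  next
    case False
    have xpos: "0 < \<bar>x\<bar>" using False R by simp
    have "\<bar>x\<bar> / (R+1) \<le> \<bar>x\<bar> - R"
    proof -
      have "\<bar>x\<bar> \<le> (\<bar>x\<bar> - R) * (R+1)" using mult_nonneg_nonneg[of R "\<bar>x\<bar>-R-1"] False R by (simp add: algebra_simps)
      then show ?thesis using R by (simp add: divide_le_eq)
    qed
    then have "max \<delta> (\<bar>x\<bar> - R) powr \<gamma> \<le> (\<bar>x\<bar> / (R+1)) powr \<gamma>"
      using \<gamma> xpos R by (intro powr_mono2') auto
    also have "\<dots> = (R+1) powr (-\<gamma>) * \<bar>x\<bar> powr \<gamma>"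
      using xpos R by (simp only: powr_divide powr_minus_divide abs_ge_zero) (simp add: field_simps)
    finally show ?thesis using False by (auto simp: indicator_def)
  qed
  have "(\<integral>\<^sup>+x. ennreal (2 * (max \<delta> (\<bar>x\<bar> - R) powr \<gamma> / (-\<gamma>))) \<partial>lborel)
     \<le> (\<integral>\<^sup>+x. ennreal C1 * indicator {-(R+1)..R+1} x
          + ennreal C2 * ennreal (if R+1 \<le> \<bar>x - 0\<bar> then \<bar>x - 0\<bar> powr (-(-\<gamma>)) else 0) \<partial>lborel)"
  proof (intro nn_integral_mono)
    fix x
    have "2 * (max \<delta> (\<bar>x\<bar> - R) powr \<gamma> / (-\<gamma>)) \<le> 2 / (-\<gamma>) * (\<delta> powr \<gamma> * indicator {-(R+1)..R+1} x
      + (R+1) powr (-\<gamma>) * (if R+1 \<le> \<bar>x - 0\<bar> then \<bar>x - 0\<bar> powr (-(-\<gamma>)) else 0))"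
      using mult_left_mono[OF pt[of x], of "2 / (-\<gamma>)"] \<gamma> by (simp add: field_simps)
    also have "\<dots> = C1 * indicator {-(R+1)..R+1} x + C2 * (if R+1 \<le> \<bar>x - 0\<bar> then \<bar>x - 0\<bar> powr (-(-\<gamma>)) else 0)"
      unfolding C1_def C2_def by (simp add: algebra_simps)
    finally show "ennreal (2 * (max \<delta> (\<bar>x\<bar> - R) powr \<gamma> / (-\<gamma>))) \<le> ennreal C1 * indicator {-(R+1)..R+1} x
          + ennreal C2 * ennreal (if R+1 \<le> \<bar>x - 0\<bar> then \<bar>x - 0\<bar> powr (-(-\<gamma>)) else 0)"
      using C by (auto simp: ennreal_plus[symmetric] ennreal_mult[symmetric] indicator_def
              simp del: ennreal_plus intro!: ennreal_leI)
  qed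
  also have "\<dots> = (\<integral>\<^sup>+x. ennreal C1 * indicator {-(R+1)..R+1} x \<partial>lborel)
      + (\<integral>\<^sup>+x. ennreal C2 * ennreal (if R+1 \<le> \<bar>x - 0\<bar> then \<bar>x - 0\<bar> powr (-(-\<gamma>)) else 0) \<partial>lborel)"
    by (rule nn_integral_add) measurable
  also have "\<dots> = ennreal C1 * emeasure lborel {-(R+1)..R+1}
      + ennreal C2 * (\<integral>\<^sup>+x. ennreal (if R+1 \<le> \<bar>x - 0\<bar> then \<bar>x - 0\<bar> powr (-(-\<gamma>)) else 0) \<partial>lborel)"
  proof -
    have "(\<integral>\<^sup>+x. ennreal C1 * indicator {-(R+1)..R+1} x \<partial>lborel) = ennreal C1 * emeasure lborel {-(R+1)..R+1}"
      by (rule nn_integral_cmult_indicator) simp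
    moreover have "(\<integral>\<^sup>+x. ennreal C2 * ennreal (if R+1 \<le> \<bar>x - 0\<bar> then \<bar>x - 0\<bar> powr (-(-\<gamma>)) else 0) \<partial>lborel)
       = ennreal C2 * (\<integral>\<^sup>+x. ennreal (if R+1 \<le> \<bar>x - 0\<bar> then \<bar>x - 0\<bar> powr (-(-\<gamma>)) else 0) \<partial>lborel)"
      by (rule nn_integral_cmult) measurable
    ultimately show ?thesis by simp
  qed
  also have "\<dots> < \<infinity>"
  proof -
    have e: "emeasure lborel {-(R+1)..R+1} = ennreal (2*R+2)" using R by simp
    have t: "(\<integral>\<^sup>+x. ennreal (if R+1 \<le> \<bar>x - 0\<bar> then \<bar>x - 0\<bar> powr (-(-\<gamma>)) else 0) \<partial>lborel)
       = ennreal (2 * ((R+1) powr (1-(-\<gamma>)) / ((-\<gamma>)-1)))"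
      by (rule two_tail_int) (use \<gamma> R in auto)
    show ?thesis unfolding e t by (simp add: ennreal_mult_less_top flip: ennreal_mult ennreal_plus)
  qed
  finally show ?thesis .
qed

lemma inner_comp:
  fixes r m \<gamma> x :: real and P :: bool
  assumes \<gamma>: "\<gamma> < -1" and r: "0 < r" and m: "0 < m"
  shows "(\<integral>\<^sup>+y. ennreal (if P \<and> r \<le> \<bar>y - x\<bar> then \<bar>y - x\<bar> powr (\<gamma> - 1) else 0)
            + ennreal (if m \<le> \<bar>y - x\<bar> then \<bar>y - x\<bar> powr (\<gamma> - 1) else 0) \<partial>lborel)
       = ennreal (2 * (r powr \<gamma> / (-\<gamma>))) * indicator {x. P} x + ennreal (2 * (m powr \<gamma> / (-\<gamma>)))"
proof -
  have c: "1 < 1 - \<gamma>" using \<gamma> by simp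
  have e: "\<gamma> - 1 = - (1 - \<gamma>)" by simp
  have A: "(\<integral>\<^sup>+y. ennreal (if m \<le> \<bar>y - x\<bar> then \<bar>y - x\<bar> powr (\<gamma> - 1) else 0) \<partial>lborel)
      = ennreal (2 * (m powr \<gamma> / (-\<gamma>)))"
    using two_tail_int[OF c m, of x] unfolding e by simp
  have B: "(\<integral>\<^sup>+y. ennreal (if P \<and> r \<le> \<bar>y - x\<bar> then \<bar>y - x\<bar> powr (\<gamma> - 1) else 0) \<partial>lborel)
      = ennreal (2 * (r powr \<gamma> / (-\<gamma>))) * indicator {x. P} x"
  proof (cases P)
    case True
    then show ?thesis using two_tail_int[OF c r, of x] unfolding e by simp
  next
    case False
    then show ?thesis by simp
  qed
  have "(\<integral>\<^sup>+y. ennreal (if P \<and> r \<le> \<bar>y - x\<bar> then \<bar>y - x\<bar> powr (\<gamma> - 1) else 0)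
            + ennreal (if m \<le> \<bar>y - x\<bar> then \<bar>y - x\<bar> powr (\<gamma> - 1) else 0) \<partial>lborel)
     = (\<integral>\<^sup>+y. ennreal (if P \<and> r \<le> \<bar>y - x\<bar> then \<bar>y - x\<bar> powr (\<gamma> - 1) else 0) \<partial>lborel)
      + (\<integral>\<^sup>+y. ennreal (if m \<le> \<bar>y - x\<bar> then \<bar>y - x\<bar> powr (\<gamma> - 1) else 0) \<partial>lborel)"
    by (rule nn_integral_add) measurable
  then show ?thesis using A B by simp
qed

lemma rho_identity:
  fixes lam W p \<gamma> :: real
  assumes lam: "0 < lam" and W: "0 < W" and p: "1 \<le> p" and \<gamma>: "\<gamma> < -1"
  shows "lam powr p * ((lam / W powr (1/p)) powr (p / (-\<gamma>))) powr \<gamma> = W"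
proof -
  have "((lam / W powr (1/p)) powr (p / (-\<gamma>))) powr \<gamma> = (lam / W powr (1/p)) powr (-p)"
    using \<gamma> by (simp add: powr_powr)
  also have "\<dots> = (W powr (1/p)) powr p / lam powr p"
    using lam W by (simp add: powr_divide powr_minus_divide)
  also have "(W powr (1/p)) powr p = W" using p W by (simp add: powr_powr)
  finally show ?thesis using lam by simp
qed

lemma nu_bound:
  fixes u u' w :: "real \<Rightarrow> real"
  assumes deriv: "\<And>x. (u has_real_derivative u' x) (at x)"
    and Rb: "\<And>z. u' z \<noteq> 0 \<Longrightarrow> \<bar>z\<bar> \<le> R" and Rpos: "0 < R"
    and w_def: "\<And>z. w z = \<bar>u' z\<bar> powr p"
    and wm[measurable]: "w \<in> borel_measurable borel"
    and p: "1 \<le> p" and \<gamma>: "\<gamma> < -1" and lam: "0 < lam" and eps: "0 < \<epsilon>"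
    and \<delta>: "0 < \<delta>" "\<delta> \<le> 1"
    and uc: "\<And>x z. \<bar>z\<bar> \<le> R \<Longrightarrow> \<bar>x - z\<bar> < \<delta> \<Longrightarrow> \<bar>w z - w x\<bar> < \<epsilon>"
  shows "ennreal (lam powr p) * nu \<gamma> (Elev lam (\<gamma> / p) u)
     \<le> (\<integral>\<^sup>+x. ennreal (2 * (w x + \<epsilon>) / (-\<gamma>)) * indicator {-(R+1)..R+1} x \<partial>lborel)
       + ennreal (lam powr p) * (\<integral>\<^sup>+x. ennreal (2 * (max \<delta> (\<bar>x\<bar> - R) powr \<gamma> / (-\<gamma>))) \<partial>lborel)"
proof -
  define K1 where "K1 = {-(R+1)..R+1::real}"
  define \<rho> where "\<rho> x = (lam / (w x + \<epsilon>) powr (1/p)) powr (p / (-\<gamma>))" for x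
  define m where "m x = max \<delta> (\<bar>x\<bar> - R)" for x
  have w0: "0 \<le> w x" for x using w_def by simp
  have \<rho>pos: "0 < \<rho> x" for x unfolding \<rho>_def using lam eps w0[of x] by simp
  have mpos: "0 < m x" for x unfolding m_def using \<delta> by simp
  have \<rho>m[measurable]: "\<rho> \<in> borel_measurable borel" unfolding \<rho>_def by measurable
  have mm[measurable]: "m \<in> borel_measurable borel" unfolding m_def by measurable
  define F where "F = (\<lambda>(x::real, y::real).
      ennreal (if x \<in> K1 \<and> \<rho> x \<le> \<bar>y - x\<bar> then \<bar>y - x\<bar> powr (\<gamma> - 1) else 0)
    + ennreal (if m x \<le> \<bar>y - x\<bar> then \<bar>y - x\<bar> powr (\<gamma> - 1) else 0))"
  have Fm: "F \<in> borel_measurable (lborel \<Otimes>\<^sub>M lborel)" unfolding F_def K1_def by measurable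
  have "nu \<gamma> (Elev lam (\<gamma> / p) u) \<le> integral\<^sup>N (lborel \<Otimes>\<^sub>M lborel) F"
    unfolding nu_def
  proof (intro nn_integral_mono)
    fix z :: "real \<times> real"
    obtain x y where z: "z = (x, y)" by (cases z)
    show "ennreal (\<bar>fst z - snd z\<bar> powr (\<gamma> - 1)) * indicator {z \<in> Elev lam (\<gamma> / p) u. fst z \<noteq> snd z} z \<le> F z"
    proof (cases "z \<in> {z \<in> Elev lam (\<gamma> / p) u. fst z \<noteq> snd z}")
      case False
      then show ?thesis by simp
    next
      case True
      then have xy: "x \<noteq> y" and E: "\<bar>u x - u y\<bar> / \<bar>x - y\<bar> powr (1 + \<gamma> / p) > lam"
        unfolding z Elev_def by auto
      have disj: "(x \<in> K1 \<and> \<rho> x \<le> \<bar>y - x\<bar>) \<or> m x \<le> \<bar>y - x\<bar>"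
        using key_point[OF deriv Rb w_def p \<gamma> lam eps \<delta> uc xy E] unfolding K1_def \<rho>_def m_def by blast
      have xy': "\<bar>x - y\<bar> = \<bar>y - x\<bar>" by simp
      show ?thesis
      proof (cases "x \<in> K1 \<and> \<rho> x \<le> \<bar>y - x\<bar>")
        case True
        have "ennreal (\<bar>y - x\<bar> powr (\<gamma> - 1)) \<le> F (x, y)"
          unfolding F_def using True by (simp add: add_increasing2)
        then show ?thesis using \<open>z \<in> _\<close> unfolding z by (simp add: xy')
      next
        case False
        then have "m x \<le> \<bar>y - x\<bar>" using disj by blast
        then have "ennreal (\<bar>y - x\<bar> powr (\<gamma> - 1)) \<le> F (x, y)"
          unfolding F_def by (simp add: add_increasing)
        then show ?thesis using \<open>z \<in> _\<close> unfolding z by (simp add: xy')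
      qed
    qed
  qed
  also have "\<dots> = (\<integral>\<^sup>+x. \<integral>\<^sup>+y. F (x, y) \<partial>lborel \<partial>lborel)"
    by (rule lborel.nn_integral_fst[OF Fm, symmetric])
  also have "\<dots> = (\<integral>\<^sup>+x. ennreal (2 * (\<rho> x powr \<gamma> / (-\<gamma>))) * indicator K1 x
        + ennreal (2 * (m x powr \<gamma> / (-\<gamma>))) \<partial>lborel)"
  proof (intro nn_integral_cong)
    fix x :: real
    show "(\<integral>\<^sup>+y. F (x, y) \<partial>lborel) = ennreal (2 * (\<rho> x powr \<gamma> / (-\<gamma>))) * indicator K1 x
        + ennreal (2 * (m x powr \<gamma> / (-\<gamma>)))"
      using inner_comp[OF \<gamma> \<rho>pos[of x] mpos[of x], of "x \<in> K1" x] unfolding F_def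
      by (simp add: indicator_def)
  qed
  also have "\<dots> = (\<integral>\<^sup>+x. ennreal (2 * (\<rho> x powr \<gamma> / (-\<gamma>))) * indicator K1 x \<partial>lborel)
      + (\<integral>\<^sup>+x. ennreal (2 * (m x powr \<gamma> / (-\<gamma>))) \<partial>lborel)"
    unfolding K1_def by (rule nn_integral_add) measurable
  finally have nb: "nu \<gamma> (Elev lam (\<gamma> / p) u) \<le> (\<integral>\<^sup>+x. ennreal (2 * (\<rho> x powr \<gamma> / (-\<gamma>))) * indicator K1 x \<partial>lborel)
      + (\<integral>\<^sup>+x. ennreal (2 * (m x powr \<gamma> / (-\<gamma>))) \<partial>lborel)" .
  have eqN: "ennreal (lam powr p) * (\<integral>\<^sup>+x. ennreal (2 * (\<rho> x powr \<gamma> / (-\<gamma>))) * indicator K1 x \<partial>lborel)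
      = (\<integral>\<^sup>+x. ennreal (2 * (w x + \<epsilon>) / (-\<gamma>)) * indicator {-(R+1)..R+1} x \<partial>lborel)"
  proof -
    have "ennreal (lam powr p) * (\<integral>\<^sup>+x. ennreal (2 * (\<rho> x powr \<gamma> / (-\<gamma>))) * indicator K1 x \<partial>lborel)
       = (\<integral>\<^sup>+x. ennreal (lam powr p) * (ennreal (2 * (\<rho> x powr \<gamma> / (-\<gamma>))) * indicator K1 x) \<partial>lborel)"
      unfolding K1_def by (rule nn_integral_cmult[symmetric]) measurable
    also have "\<dots> = (\<integral>\<^sup>+x. ennreal (2 * (w x + \<epsilon>) / (-\<gamma>)) * indicator {-(R+1)..R+1} x \<partial>lborel)"
    proof (intro nn_integral_cong)
      fix x :: real
      have W: "0 < w x + \<epsilon>" using w0[of x] eps by simp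
      have id: "lam powr p * \<rho> x powr \<gamma> = w x + \<epsilon>"
        unfolding \<rho>_def by (rule rho_identity[OF lam W p \<gamma>])
      have eq1: "lam powr p * (2 * (\<rho> x powr \<gamma> / (-\<gamma>))) = 2 * (w x + \<epsilon>) / (-\<gamma>)"
        using id by (simp add: field_simps)
      have nn: "0 \<le> 2 * (\<rho> x powr \<gamma> / (-\<gamma>))" using \<gamma> by (simp add: divide_nonneg_neg)
      have "ennreal (lam powr p) * ennreal (2 * (\<rho> x powr \<gamma> / (-\<gamma>))) = ennreal (2 * (w x + \<epsilon>) / (-\<gamma>))"
        by (simp only: eq1[symmetric] ennreal_mult[OF powr_ge_zero nn])
      then show "ennreal (lam powr p) * (ennreal (2 * (\<rho> x powr \<gamma> / (-\<gamma>))) * indicator K1 x)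
          = ennreal (2 * (w x + \<epsilon>) / (-\<gamma>)) * indicator {-(R+1)..R+1} x"
        unfolding K1_def by (simp only: mult.assoc[symmetric])
    qed
    finally show ?thesis .
  qed
  have "ennreal (lam powr p) * nu \<gamma> (Elev lam (\<gamma> / p) u)
      \<le> ennreal (lam powr p) * ((\<integral>\<^sup>+x. ennreal (2 * (\<rho> x powr \<gamma> / (-\<gamma>))) * indicator K1 x \<partial>lborel)
      + (\<integral>\<^sup>+x. ennreal (2 * (m x powr \<gamma> / (-\<gamma>))) \<partial>lborel))"
    using nb by (rule mult_left_mono) simp
  also have "\<dots> = (\<integral>\<^sup>+x. ennreal (2 * (w x + \<epsilon>) / (-\<gamma>)) * indicator {-(R+1)..R+1} x \<partial>lborel)
       + ennreal (lam powr p) * (\<integral>\<^sup>+x. ennreal (2 * (max \<delta> (\<bar>x\<bar> - R) powr \<gamma> / (-\<gamma>))) \<partial>lborel)"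
    unfolding distrib_left eqN m_def ..
  finally show ?thesis .
qed

theorem lemma3p5:
  fixes u u' :: "real \<Rightarrow> real" and p \<gamma> :: real
  assumes deriv: "\<And>x. (u has_real_derivative u' x) (at x)"
    and cont: "continuous_on UNIV u'"
    and supp: "compact (closure {x. u' x \<noteq> 0})"
    and p: "1 \<le> p"
    and \<gamma>: "\<gamma> < -1"
  shows "Limsup (at_right 0) (\<lambda>lam. ennreal (lam powr p) * nu \<gamma> (Elev lam (\<gamma> / p) u))
           \<le> ennreal (kappa1 p / \<bar>\<gamma>\<bar>) * (\<integral>\<^sup>+ x. ennreal (\<bar>u' x\<bar> powr p) \<partial>lborel)"
proof -
  have "bounded (closure {x. u' x \<noteq> 0})" using supp by (rule compact_imp_bounded)
  then obtain R0 where R0: "\<And>x. x \<in> closure {x. u' x \<noteq> 0} \<Longrightarrow> norm x \<le> R0"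
    unfolding bounded_iff by (elim exE) (rule that, erule bspec)
  define R where "R = max R0 1"
  have Rpos: "0 < R" unfolding R_def by (simp add: less_max_iff_disj)
  have Rb: "\<And>z. u' z \<noteq> 0 \<Longrightarrow> \<bar>z\<bar> \<le> R"
  proof -
    fix z assume "u' z \<noteq> 0"
    then have "z \<in> closure {x. u' x \<noteq> 0}" by (intro closure_subset[THEN subsetD]) simp
    then have "norm z \<le> R0" by (rule R0)
    then show "\<bar>z\<bar> \<le> R" unfolding R_def by (simp add: le_max_iff_disj)
  qed
  define w where "w z = \<bar>u' z\<bar> powr p" for z
  have w0: "\<And>z. 0 \<le> w z" unfolding w_def by simp
  have wcont: "continuous_on UNIV w"
    unfolding w_def using p by (intro continuous_on_powr' continuous_on_rabs cont continuous_on_const) auto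
  have um[measurable]: "u' \<in> borel_measurable borel" by (rule borel_measurable_continuous_onI[OF cont])
  have wm[measurable]: "w \<in> borel_measurable borel" by (rule borel_measurable_continuous_onI[OF wcont])
  define I where "I = (\<integral>\<^sup>+ x. ennreal (\<bar>u' x\<bar> powr p) \<partial>lborel)"
  define K1 where "K1 = {-(R+1)..R+1}"
  have main: "Limsup (at_right 0) (\<lambda>lam. ennreal (lam powr p) * nu \<gamma> (Elev lam (\<gamma> / p) u))
       \<le> ennreal (2 / (-\<gamma>)) * (I + ennreal (\<epsilon> * (2*R+2)))" if eps: "0 < \<epsilon>" for \<epsilon>
  proof -
    have "uniformly_continuous_on (cball 0 (R+1)) w"
      by (rule compact_uniformly_continuous) (auto intro: continuous_on_subset[OF wcont])
    then obtain d where d: "0 < d" and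
      dd0: "\<forall>x\<in>cball 0 (R+1). \<forall>x'\<in>cball 0 (R+1). dist x' x < d \<longrightarrow> dist (w x') (w x) < \<epsilon>"
      unfolding uniformly_continuous_on_def using eps by blast
    have dd: "\<And>x x'. x \<in> cball 0 (R+1) \<Longrightarrow> x' \<in> cball 0 (R+1) \<Longrightarrow> dist x' x < d \<Longrightarrow> dist (w x') (w x) < \<epsilon>"
      using dd0 by blast
    define \<delta> where "\<delta> = min d 1"
    have \<delta>: "0 < \<delta>" "\<delta> \<le> 1" unfolding \<delta>_def using d by auto
    have uc: "\<bar>w z - w x\<bar> < \<epsilon>" if "\<bar>z\<bar> \<le> R" "\<bar>x - z\<bar> < \<delta>" for x z
    proof -
      have "x \<in> cball 0 (R+1)" "z \<in> cball 0 (R+1)" using that \<delta> by auto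
      moreover have "dist z x < d" using that unfolding \<delta>_def dist_real_def by auto
      ultimately show ?thesis using dd[of x z] by (simp add: dist_real_def)
    qed
    define B where "B = (\<integral>\<^sup>+x. ennreal (2 * (max \<delta> (\<bar>x\<bar> - R) powr \<gamma> / (-\<gamma>))) \<partial>lborel)"
    have Bfin: "B < \<infinity>" unfolding B_def by (rule far_finite[OF \<delta> Rpos \<gamma>])
    define N where "N = (\<integral>\<^sup>+x. ennreal (2 * (w x + \<epsilon>) / (-\<gamma>)) * indicator K1 x \<partial>lborel)"
    have bound: "ennreal (lam powr p) * nu \<gamma> (Elev lam (\<gamma> / p) u) \<le> N + ennreal (lam powr p) * B"
      if lam: "0 < lam" for lam
      unfolding N_def B_def K1_def by (rule nu_bound[OF deriv Rb Rpos w_def wm p \<gamma> lam eps \<delta> uc])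
    have tend: "((\<lambda>lam. N + ennreal (lam powr p) * B) \<longlongrightarrow> N) (at_right 0)"
    proof -
      have "((\<lambda>lam::real. lam powr p) \<longlongrightarrow> 0) (at_right 0)"
        using p by (intro tendsto_zero_powrI) (auto intro: tendsto_ident_at eventually_at_right_less[THEN eventually_mono])
      then have "((\<lambda>lam::real. ennreal (lam powr p)) \<longlongrightarrow> ennreal 0) (at_right 0)"
        by (rule tendsto_ennrealI)
      then have "((\<lambda>lam::real. B * ennreal (lam powr p)) \<longlongrightarrow> B * 0) (at_right 0)"
        using Bfin by (intro ennreal_tendsto_cmult) auto
      then have "((\<lambda>lam::real. N + B * ennreal (lam powr p)) \<longlongrightarrow> N + 0) (at_right 0)"
        by (intro tendsto_add tendsto_const) auto
      then show ?thesis by (simp add: mult.commute)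
    qed
    have "Limsup (at_right 0) (\<lambda>lam. ennreal (lam powr p) * nu \<gamma> (Elev lam (\<gamma> / p) u))
        \<le> Limsup (at_right 0) (\<lambda>lam. N + ennreal (lam powr p) * B)"
      by (rule Limsup_mono, rule eventually_mono[OF eventually_at_right_less], rule bound) simp
    also have "\<dots> = N" by (rule lim_imp_Limsup[OF _ tend]) simp
    also have "N \<le> ennreal (2 / (-\<gamma>)) * (I + ennreal (\<epsilon> * (2*R+2)))"
    proof -
      have "N \<le> (\<integral>\<^sup>+x. ennreal (2 / (-\<gamma>)) * (ennreal (\<bar>u' x\<bar> powr p) + ennreal \<epsilon> * indicator K1 x) \<partial>lborel)"
        unfolding N_def
      proof (intro nn_integral_mono)
        fix x
        have e1: "ennreal (2 * (w x + \<epsilon>) / (-\<gamma>)) = ennreal (2 / (-\<gamma>)) * (ennreal (w x) + ennreal \<epsilon>)"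
        proof -
          have "2 * (w x + \<epsilon>) / (-\<gamma>) = 2 / (-\<gamma>) * (w x + \<epsilon>)" by simp
          moreover have "0 \<le> 2 / (-\<gamma>)" using \<gamma> by simp
          moreover have "0 \<le> w x + \<epsilon>" using w0[of x] eps by simp
          ultimately show ?thesis using w0[of x] eps
            by (simp only: ennreal_mult ennreal_plus[symmetric])
        qed
        show "ennreal (2 * (w x + \<epsilon>) / (-\<gamma>)) * indicator K1 x
            \<le> ennreal (2 / (-\<gamma>)) * (ennreal (\<bar>u' x\<bar> powr p) + ennreal \<epsilon> * indicator K1 x)"
          unfolding e1 unfolding w_def by (cases "x \<in> K1") auto
      qed
      also have "\<dots> = ennreal (2 / (-\<gamma>)) * (\<integral>\<^sup>+x. ennreal (\<bar>u' x\<bar> powr p) + ennreal \<epsilon> * indicator K1 x \<partial>lborel)"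
        unfolding K1_def by (rule nn_integral_cmult) measurable
      also have "(\<integral>\<^sup>+x. ennreal (\<bar>u' x\<bar> powr p) + ennreal \<epsilon> * indicator K1 x \<partial>lborel)
          = I + ennreal \<epsilon> * emeasure lborel K1"
        unfolding I_def K1_def by (subst nn_integral_add) (auto simp: nn_integral_cmult_indicator)
      also have "ennreal \<epsilon> * emeasure lborel K1 = ennreal (\<epsilon> * (2*R+2))"
        unfolding K1_def using Rpos eps by (simp add: ennreal_mult)
      finally show ?thesis by simp
    qed
    finally show ?thesis .
  qed
  have k: "kappa1 p = 2" unfolding kappa1_def by simp
  have g: "\<bar>\<gamma>\<bar> = -\<gamma>" using \<gamma> by simp
  show ?thesis unfolding k g I_def[symmetric]
  proof (rule ennreal_le_epsilon)
    fix e :: real assume "ennreal (2 / (-\<gamma>)) * I < top" and e: "0 < e"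
    define C where "C = 2 / (-\<gamma>) * (2*R+2)"
    have Cpos: "0 < C" unfolding C_def using \<gamma> Rpos by (simp add: divide_pos_neg)
    define \<epsilon> where "\<epsilon> = e / C"
    have eps: "0 < \<epsilon>" unfolding \<epsilon>_def using e Cpos by simp
    have "ennreal (2 / (-\<gamma>)) * (I + ennreal (\<epsilon> * (2*R+2)))
        = ennreal (2 / (-\<gamma>)) * I + ennreal (2 / (-\<gamma>) * (\<epsilon> * (2*R+2)))"
    proof -
      have nC: "0 \<le> 2 / (-\<gamma>)" using \<gamma> by simp
      have nX: "0 \<le> \<epsilon> * (2*R+2)" using eps Rpos by simp
      show ?thesis by (subst distrib_left) (simp only: ennreal_mult[OF nC nX])
    qed
    also have "2 / (-\<gamma>) * (\<epsilon> * (2*R+2)) = e"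
    proof -
      have "2 / (-\<gamma>) * (\<epsilon> * (2*R+2)) = C * \<epsilon>" unfolding C_def by (simp only: mult_ac)
      also have "\<dots> = e" unfolding \<epsilon>_def using Cpos by simp
      finally show ?thesis .
    qed
    finally have "ennreal (2 / (-\<gamma>)) * (I + ennreal (\<epsilon> * (2*R+2))) = ennreal (2 / (-\<gamma>)) * I + ennreal e" .
    then show "Limsup (at_right 0) (\<lambda>lam. ennreal (lam powr p) * nu \<gamma> (Elev lam (\<gamma> / p) u))
        \<le> ennreal (2 / (-\<gamma>)) * I + ennreal e"
      using main[OF eps] by simp
  qed
qed

end
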